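(* Let $R$ be a generalized Rickart $*$-ring. Then the following are equivalent: (1) $R$ satisfies the parallelogram law; (2) whenever projections $e,f$ are in position $p'$, $e\sim f$.
   Context: A $*$-ring is an associative ring $R$ with an involution $x\mapsto x^*$ (additive, $(xy)^*=y^*x^*$, $x^{**}=x$). A projection is an element $e$ with $e=e^*=e^2$; projections are partially ordered by $e\le f$ iff $e=ef$, and $\wedge,\vee$ denote infimum and supremum in this poset. $e\sim f$ means there is $w\in R$ with $w^*w=e$, $ww^*=f$. For $a\in R$, $r(a)=\{b: ab=0\}$. $R$ is a generalized Rickart $*$-ring if for every $x$ there exist $n\ge1$ and a projection $g$ with $r(x^n)=gR$; such a ring has identity $1$. $R$ satisfies the parallelogram law if $e-e\wedge f\sim e\vee f-f$ for every pair of projections $e,f$ for which $e\wedge f$ and $e\vee f$ exist. Projections $e,f$ are in position $p'$ if $e\wedge(1-f)=0$ and $e\vee(1-f)=1$. *)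

theory Defs
  imports Main
begin

definition involution :: "('a::ring_1 \<Rightarrow> 'a) \<Rightarrow> bool" where
  "involution s \<longleftrightarrow> (\<forall>x y. s (x + y) = s x + s y) \<and> (\<forall>x y. s (x * y) = s y * s x)
     \<and> (\<forall>x. s (s x) = x)"

definition is_proj :: "('a::ring_1 \<Rightarrow> 'a) \<Rightarrow> 'a \<Rightarrow> bool" where
  "is_proj s e \<longleftrightarrow> e = s e \<and> e = e * e"

definition proj_le :: "'a::ring_1 \<Rightarrow> 'a \<Rightarrow> bool" where
  "proj_le e f \<longleftrightarrow> e = e * f"

definition is_proj_inf :: "('a::ring_1 \<Rightarrow> 'a) \<Rightarrow> 'a \<Rightarrow> 'a \<Rightarrow> 'a \<Rightarrow> bool" where
  "is_proj_inf s e f m \<longleftrightarrow> is_proj s m \<and> proj_le m e \<and> proj_le m f \<and>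
     (\<forall>g. is_proj s g \<and> proj_le g e \<and> proj_le g f \<longrightarrow> proj_le g m)"

definition is_proj_sup :: "('a::ring_1 \<Rightarrow> 'a) \<Rightarrow> 'a \<Rightarrow> 'a \<Rightarrow> 'a \<Rightarrow> bool" where
  "is_proj_sup s e f j \<longleftrightarrow> is_proj s j \<and> proj_le e j \<and> proj_le f j \<and>
     (\<forall>g. is_proj s g \<and> proj_le e g \<and> proj_le f g \<longrightarrow> proj_le j g)"

definition proj_equiv :: "('a::ring_1 \<Rightarrow> 'a) \<Rightarrow> 'a \<Rightarrow> 'a \<Rightarrow> bool" where
  "proj_equiv s e f \<longleftrightarrow> (\<exists>w. s w * w = e \<and> w * s w = f)"

definition right_annihilator :: "'a::ring_1 \<Rightarrow> 'a set" where
  "right_annihilator a = {b. a * b = 0}"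

definition generalized_rickart :: "('a::ring_1 \<Rightarrow> 'a) \<Rightarrow> bool" where
  "generalized_rickart s \<longleftrightarrow> (\<forall>x. \<exists>n\<ge>1. \<exists>g. is_proj s g \<and>
      right_annihilator (x ^ n) = {g * y | y. True})"

definition parallelogram_law :: "('a::ring_1 \<Rightarrow> 'a) \<Rightarrow> bool" where
  "parallelogram_law s \<longleftrightarrow> (\<forall>e f m j. is_proj s e \<and> is_proj s f \<and>
      is_proj_inf s e f m \<and> is_proj_sup s e f j \<longrightarrow> proj_equiv s (e - m) (j - f))"

definition position_p' :: "('a::ring_1 \<Rightarrow> 'a) \<Rightarrow> 'a \<Rightarrow> 'a \<Rightarrow> bool" where
  "position_p' s e f \<longleftrightarrow> is_proj_inf s e (1 - f) 0 \<and> is_proj_sup s e (1 - f) 1"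

end

theory Submission
  imports Defs
begin

lemma inv_basic:
  assumes "involution s"
  shows "s 1 = 1" "s 0 = 0" "\<And>a b. s (a - b) = s a - s b"
        "\<And>a b. s (a * b) = s b * s a" "\<And>a. s (s a) = a"
proof -
  have add: "\<And>x y. s (x + y) = s x + s y" and mul: "\<And>x y. s (x * y) = s y * s x"
    and ss: "\<And>x. s (s x) = x" using assms unfolding involution_def by auto
  have "s (s 1 * 1) = s 1 * s (s 1)" by (rule mul)
  then show "s 1 = 1" using ss by simp
  have "s (0 + 0) = s 0 + s 0" by (rule add)
  then show z: "s 0 = 0" by simp
  show "\<And>a b. s (a - b) = s a - s b"
  proof -
    fix a b
    have "s a = s ((a - b) + b)" by simp
    also have "\<dots> = s (a - b) + s b" by (rule add)
    finally show "s (a - b) = s a - s b" by (simp add: algebra_simps)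
  qed
  show "\<And>a b. s (a * b) = s b * s a" by (rule mul)
  show "\<And>a. s (s a) = a" by (rule ss)
qed

lemma le_sym:
  assumes "involution s" "is_proj s e" "is_proj s f" "proj_le e f"
  shows "f * e = e"
proof -
  have "e = s e" using assms(2) unfolding is_proj_def by auto
  also have "\<dots> = s (e * f)" using assms(4) unfolding proj_le_def by auto
  also have "\<dots> = s f * s e" using inv_basic(4)[OF assms(1)] by simp
  also have "\<dots> = f * e" using assms(2,3) unfolding is_proj_def by auto
  finally show ?thesis by simp
qed

lemma proj_diff:
  assumes "involution s" "is_proj s e" "is_proj s f" "proj_le f e"
  shows "is_proj s (e - f)"
proof -
  have fe: "f * e = f" using assms(4) unfolding proj_le_def by simp
  have ef: "e * f = f" using le_sym[OF assms(1,3,2,4)] .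
  have "(e - f) * (e - f) = e * e - e * f - f * e + f * f" by (simp add: algebra_simps)
  also have "\<dots> = e - f" using fe ef assms(2,3) unfolding is_proj_def by simp
  finally show ?thesis using assms(2,3) inv_basic(3)[OF assms(1)] unfolding is_proj_def
    by simp
qed

lemma proj_one: "involution s \<Longrightarrow> is_proj s 1"
  using inv_basic(1) unfolding is_proj_def by auto

lemma proj_zero: "involution s \<Longrightarrow> is_proj s 0"
  using inv_basic(2) unfolding is_proj_def by auto

lemma proj_one_minus:
  assumes "involution s" "is_proj s f" shows "is_proj s (1 - f)"
  by (rule proj_diff[OF assms(1) proj_one[OF assms(1)] assms(2)]) (simp add: proj_le_def)

theorem mainTheorem17:
  fixes s :: "'a::ring_1 \<Rightarrow> 'a"
  assumes "involution s"
    and "generalized_rickart s"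
  shows "parallelogram_law s \<longleftrightarrow>
    (\<forall>e f. is_proj s e \<and> is_proj s f \<and> position_p' s e f \<longrightarrow> proj_equiv s e f)"
proof
  assume P: "parallelogram_law s"
  show "\<forall>e f. is_proj s e \<and> is_proj s f \<and> position_p' s e f \<longrightarrow> proj_equiv s e f"
  proof (intro allI impI)
    fix e f assume H: "is_proj s e \<and> is_proj s f \<and> position_p' s e f"
    have "proj_equiv s (e - 0) (1 - (1 - f))"
      using P H proj_one_minus[OF assms(1)] unfolding parallelogram_law_def position_p'_def
      by blast
    then show "proj_equiv s e f" by simp
  qed
next
  assume Q: "\<forall>e f. is_proj s e \<and> is_proj s f \<and> position_p' s e f \<longrightarrow> proj_equiv s e f"
  show "parallelogram_law s"
    unfolding parallelogram_law_def
  proof (intro allI impI)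
    fix e f m j
    assume H: "is_proj s e \<and> is_proj s f \<and> is_proj_inf s e f m \<and> is_proj_sup s e f j"
    have pe: "is_proj s e" and pf: "is_proj s f" using H by auto
    have pm: "is_proj s m" and me: "m * e = m" and mf: "m * f = m"
      and minf: "\<And>g. is_proj s g \<Longrightarrow> g * e = g \<Longrightarrow> g * f = g \<Longrightarrow> g * m = g"
      using H unfolding is_proj_inf_def proj_le_def by metis+
    have pj: "is_proj s j" and ej: "e * j = e" and fj: "f * j = f"
      and jsup: "\<And>g. is_proj s g \<Longrightarrow> e * g = e \<Longrightarrow> f * g = f \<Longrightarrow> j * g = j"
      using H unfolding is_proj_sup_def proj_le_def by metis+
    have em: "e * m = m" using le_sym[OF assms(1) pm pe] me by (simp add: proj_le_def)
    have jf: "j * f = f" using le_sym[OF assms(1) pf pj] fj by (simp add: proj_le_def)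
    have ee: "e * e = e" and ff: "f * f = f" and mm: "m * m = m" and jj: "j * j = j"
      using pe pf pm pj unfolding is_proj_def by metis+
    define e1 where "e1 = e - m"
    define q where "q = 1 - (j - f)"
    have pe1: "is_proj s e1" unfolding e1_def
      using proj_diff[OF assms(1) pe pm] me by (simp add: proj_le_def)
    have pjf: "is_proj s (j - f)"
      using proj_diff[OF assms(1) pj pf] fj by (simp add: proj_le_def)
    have pq: "is_proj s q" unfolding q_def using proj_one_minus[OF assms(1) pjf] .
    have fq: "f * q = f" unfolding q_def using fj ff by (simp add: algebra_simps)
    have jq: "(1 - j) * q = 1 - j" unfolding q_def using jf jj by (simp add: algebra_simps)
    have mh: "m * h = m" if "f * h = f" for h
      using that mf by (metis mult.assoc)
    have sup: "is_proj_sup s e1 q 1"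
      unfolding is_proj_sup_def proj_le_def
    proof (intro conjI allI impI)
      show "is_proj s 1" using proj_one[OF assms(1)] .
      show "e1 = e1 * 1" by simp
      show "q = q * 1" by simp
      fix h assume hh: "is_proj s h \<and> e1 = e1 * h \<and> q = q * h"
      have fh: "f * h = f" using hh fq by (metis mult.assoc)
      have eh: "e * h = e"
      proof -
        have "e = e1 + m" unfolding e1_def by simp
        then have "e * h = e1 * h + m * h" by (simp add: algebra_simps)
        also have "\<dots> = e1 + m" using hh mh[OF fh] by simp
        finally show ?thesis unfolding e1_def by simp
      qed
      have jh: "j * h = j" using jsup hh eh fh by blast
      have "(1 - j) * h = 1 - j" using hh jq by (metis mult.assoc)
      then have "h = 1" using jh by (simp add: algebra_simps)
      then show "1 = 1 * h" by simp
    qed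
    have inf: "is_proj_inf s e1 q 0"
      unfolding is_proj_inf_def proj_le_def
    proof (intro conjI allI impI)
      show "is_proj s 0" using proj_zero[OF assms(1)] .
      show "0 = 0 * e1" by simp
      show "0 = 0 * q" by simp
      fix h assume hh: "is_proj s h \<and> h = h * e1 \<and> h = h * q"
      have e1e: "e1 * e = e1" unfolding e1_def using ee me by (simp add: algebra_simps)
      have he: "h * e = h" using hh e1e by (metis mult.assoc)
      have hj: "h * j = h" using he ej by (metis mult.assoc)
      have "h = h * q" using hh by simp
      also have "\<dots> = h - h * j + h * f" unfolding q_def by (simp add: algebra_simps)
      finally have hf: "h * f = h" using hj by simp
      have hm: "h * m = h" using minf hh he hf by blast
      have "h = h * e1" using hh by simp
      also have "\<dots> = h * e - h * m" unfolding e1_def by (simp add: algebra_simps)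
      finally have "h = 0" using he hm by simp
      then show "h = h * 0" by simp
    qed
    have "position_p' s e1 (j - f)" unfolding position_p'_def using sup inf q_def by simp
    then show "proj_equiv s (e - m) (j - f)" using Q pe1 pjf unfolding e1_def by blast
  qed
qed

end
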